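(* For every $m\ge 1$ there is a market with $m$ items and $m+1$ unit-demand buyers whose maximum social welfare is $m+o(1)$ (as $m\to\infty$) such that: for some fixed selling order of the items there exists a subgame perfect equilibrium of the sequential first-price auction with revenue $1$, while for a different fixed selling order every subgame perfect equilibrium has revenue at least $m$.
   Context: Unit demand: buyer $i$ has values $v_{i,j}\ge0$ and $v_i(S)=\max_{j\in S}v_{i,j}$, $v_i(\emptyset)=0$; utility is quasi-linear. In a sequential first-price auction the items are sold one at a time in the given selling order, each by a sealed-bid first-price auction without reserve price: each buyer submits a nonnegative bid, a highest bidder wins (ties broken by a seller-chosen rule) and pays his bid. Full information. A subgame perfect equilibrium is a (pure) strategy profile that is a Nash equilibrium in every subgame; its revenue is the total payment on the equilibrium path. Social welfare is the sum of buyers' values for their bundles. *)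

theory Defs
  imports Complex_Main "HOL-Library.FuncSet"
begin

text \<open>Buyers are 0..<n, items are 0..<m. Values: v i j = value of buyer i for item j.
  A bid profile is a function nat => real (entries for non-buyers are 0).
  A history is the list of bid profiles of the auctions already held (full information:
  all bids are observed).\<close>

type_synonym profile = "nat \<Rightarrow> real"
type_synonym hist = "profile list"

definition bval :: "(nat \<Rightarrow> nat \<Rightarrow> real) \<Rightarrow> nat \<Rightarrow> nat set \<Rightarrow> real" where
  "bval v i S = (if S = {} then 0 else Max (v i ` S))"

text \<open>Selling order: a list enumerating the items 0..<m without repetition;
  the k-th auction sells item sigma ! k.\<close>
definition is_order :: "nat \<Rightarrow> nat list \<Rightarrow> bool" where
  "is_order m \<sigma> \<longleftrightarrow> distinct \<sigma> \<and> set \<sigma> = {..<m}"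

definition tie_rule :: "nat \<Rightarrow> (hist \<Rightarrow> profile \<Rightarrow> nat) \<Rightarrow> bool" where
  "tie_rule n \<tau> \<longleftrightarrow> (\<forall>h b. \<tau> h b < n \<and> (\<forall>j<n. b j \<le> b (\<tau> h b)))"

function play :: "nat \<Rightarrow> nat \<Rightarrow> (nat \<Rightarrow> hist \<Rightarrow> real) \<Rightarrow> hist \<Rightarrow> hist" where
  "play n m s h = (if length h < m
      then play n m s (h @ [\<lambda>i. if i < n then s i h else 0]) else h)"
  by auto
termination by (relation "measure (\<lambda>(n, m, s, h). m - length h)") auto

declare play.simps[simp del]

definition won :: "(hist \<Rightarrow> profile \<Rightarrow> nat) \<Rightarrow> hist \<Rightarrow> nat \<Rightarrow> nat set" where
  "won \<tau> H i = {k. k < length H \<and> \<tau> (take k H) (H ! k) = i}"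

definition utility :: "(nat \<Rightarrow> nat \<Rightarrow> real) \<Rightarrow> nat list \<Rightarrow> (hist \<Rightarrow> profile \<Rightarrow> nat)
    \<Rightarrow> nat \<Rightarrow> hist \<Rightarrow> real" where
  "utility v \<sigma> \<tau> i H = bval v i ((\<lambda>k. \<sigma> ! k) ` won \<tau> H i) - (\<Sum>k\<in>won \<tau> H i. (H ! k) i)"

definition revenue :: "(hist \<Rightarrow> profile \<Rightarrow> nat) \<Rightarrow> hist \<Rightarrow> real" where
  "revenue \<tau> H = (\<Sum>k<length H. (H ! k) (\<tau> (take k H) (H ! k)))"

definition valid_hist :: "nat \<Rightarrow> nat \<Rightarrow> hist \<Rightarrow> bool" where
  "valid_hist n m h \<longleftrightarrow> length h \<le> m \<and>
     (\<forall>b\<in>set h. \<forall>i. (i < n \<longrightarrow> 0 \<le> b i) \<and> (n \<le> i \<longrightarrow> b i = 0))"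

definition strategy_profile :: "nat \<Rightarrow> (nat \<Rightarrow> hist \<Rightarrow> real) \<Rightarrow> bool" where
  "strategy_profile n s \<longleftrightarrow> (\<forall>i<n. \<forall>h. 0 \<le> s i h)"

definition is_SPE :: "nat \<Rightarrow> nat \<Rightarrow> (nat \<Rightarrow> nat \<Rightarrow> real) \<Rightarrow> nat list
    \<Rightarrow> (hist \<Rightarrow> profile \<Rightarrow> nat) \<Rightarrow> (nat \<Rightarrow> hist \<Rightarrow> real) \<Rightarrow> bool" where
  "is_SPE n m v \<sigma> \<tau> s \<longleftrightarrow> strategy_profile n s \<and>
     (\<forall>h. valid_hist n m h \<and> length h < m \<longrightarrow>
        (\<forall>i<n. \<forall>s'. (\<forall>h'. 0 \<le> s' h') \<longrightarrow>
           utility v \<sigma> \<tau> i (play n m (s(i := s')) h) \<le> utility v \<sigma> \<tau> i (play n m s h)))"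

text \<open>Social welfare of an allocation a (item j goes to buyer a j) and its maximum.\<close>
definition welfare :: "(nat \<Rightarrow> nat \<Rightarrow> real) \<Rightarrow> nat \<Rightarrow> nat \<Rightarrow> (nat \<Rightarrow> nat) \<Rightarrow> real" where
  "welfare v n m a = (\<Sum>i<n. bval v i {j. j < m \<and> a j = i})"

definition opt_welfare :: "(nat \<Rightarrow> nat \<Rightarrow> real) \<Rightarrow> nat \<Rightarrow> nat \<Rightarrow> real" where
  "opt_welfare v n m = Max (welfare v n m ` ({..<m} \<rightarrow>\<^sub>E {..<n}))"

end

theory Submission
  imports Defs
begin

definition prof :: "nat \<Rightarrow> (nat \<Rightarrow> hist \<Rightarrow> real) \<Rightarrow> hist \<Rightarrow> profile" where
  "prof n s h = (\<lambda>i. if i < n then s i h else 0)"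

lemma play_step: "length h < m \<Longrightarrow> play n m s h = play n m s (h @ [prof n s h])"
  by (subst play.simps) (simp add: prof_def)

lemma play_done: "m \<le> length h \<Longrightarrow> play n m s h = h"
  by (subst play.simps) simp

lemma play_char:
  "length h \<le> m \<Longrightarrow> length (play n m s h) = m \<and> take (length h) (play n m s h) = h \<and>
    (\<forall>k. length h \<le> k \<and> k < m \<longrightarrow> play n m s h ! k = prof n s (take k (play n m s h)))"
proof (induction n m s h rule: play.induct)
  case (1 n m s h)
  show ?case
  proof (cases "length h < m")
    case False
    then have "length h = m" using "1.prems" by simp
    then show ?thesis using play_done[of m h n s] by auto
  next
    case True
    define h' where "h' = h @ [prof n s h]"
    have eq: "play n m s h = play n m s h'" using play_step[OF True] h'_def by simp
    have IH: "length (play n m s h') = m \<and> take (length h') (play n m s h') = h' \<and>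
      (\<forall>k. length h' \<le> k \<and> k < m \<longrightarrow> play n m s h' ! k = prof n s (take k (play n m s h')))"
      using "1.IH"[OF True] True unfolding h'_def prof_def by simp
    let ?H = "play n m s h'"
    have lh: "length h' = Suc (length h)" by (simp add: h'_def)
    have t1: "take (Suc (length h)) ?H = h'" using IH lh by simp
    have t0: "take (length h) ?H = h"
    proof -
      have "take (length h) ?H = take (length h) (take (Suc (length h)) ?H)" by simp
      also have "\<dots> = h" using t1 by (simp add: h'_def)
      finally show ?thesis .
    qed
    have nth0: "?H ! length h = prof n s h"
    proof -
      have "?H ! length h = take (Suc (length h)) ?H ! length h" by simp
      also have "\<dots> = prof n s h" using t1 by (simp add: h'_def nth_append)
      finally show ?thesis .
    qed
    show ?thesis unfolding eq
    proof (intro conjI allI impI)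
      show "length ?H = m" using IH by simp
      show "take (length h) ?H = h" by (rule t0)
    next
      fix k assume k: "length h \<le> k \<and> k < m"
      show "?H ! k = prof n s (take k ?H)"
      proof (cases "k = length h")
        case True then show ?thesis using nth0 t0 by simp
      next
        case False then show ?thesis using IH k lh by auto
      qed
    qed
  qed
qed


definition pay :: "(hist \<Rightarrow> profile \<Rightarrow> nat) \<Rightarrow> hist \<Rightarrow> nat \<Rightarrow> real" where
  "pay \<tau> H i = (\<Sum>k\<in>won \<tau> H i. (H ! k) i)"

lemma utility_pay: "utility v \<sigma> \<tau> i H = bval v i ((\<lambda>k. \<sigma> ! k) ` won \<tau> H i) - pay \<tau> H i"
  by (simp add: utility_def pay_def)

lemma won_sub: "won \<tau> H i \<subseteq> {..<length H}"
  by (auto simp: won_def)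

lemma finite_won[simp]: "finite (won \<tau> H i)"
  by (rule finite_subset[OF won_sub]) simp

lemma prefix_nth:
  assumes "take (length g) G = g" "k < length g"
  shows "take k G = take k g" "G ! k = g ! k"
proof -
  have "take k G = take k (take (length g) G)" using assms(2) by simp
  then show "take k G = take k g" using assms(1) by simp
  have "G ! k = take (length g) G ! k" using assms(2) by simp
  then show "G ! k = g ! k" using assms(1) by simp
qed

lemma won_prefix:
  assumes "take (length g) G = g" "length g \<le> length G"
  shows "won \<tau> G i \<inter> {..<length g} = won \<tau> g i"
proof (rule set_eqI)
  fix k
  show "k \<in> won \<tau> G i \<inter> {..<length g} \<longleftrightarrow> k \<in> won \<tau> g i"
  proof (cases "k < length g")
    case True
    then show ?thesis using prefix_nth[OF assms(1) True] assms(2) by (simp add: won_def)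
  next
    case False
    then show ?thesis by (simp add: won_def)
  qed
qed

lemma won_snoc: "won \<tau> (g @ [b]) i = won \<tau> g i \<union> (if \<tau> g b = i then {length g} else {})"
  by (auto simp: won_def nth_append less_Suc_eq)

lemma pay_snoc: "pay \<tau> (g @ [b]) i = pay \<tau> g i + (if \<tau> g b = i then b i else 0)"
proof -
  have d: "length g \<notin> won \<tau> g i" by (auto simp: won_def)
  have c: "(\<Sum>k\<in>won \<tau> g i. ((g @ [b]) ! k) i) = (\<Sum>k\<in>won \<tau> g i. (g ! k) i)"
    by (rule sum.cong) (auto simp: won_def nth_append)
  show ?thesis unfolding pay_def won_snoc using d c by (auto simp: sum.insert_if)
qed

lemma revenue_snoc: "revenue \<tau> (g @ [b]) = revenue \<tau> g + b (\<tau> g b)"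
  by (simp add: revenue_def nth_append)

lemma pay_split:
  assumes "take (length g) G = g" "length g \<le> length G"
  shows "pay \<tau> G i = pay \<tau> g i + (\<Sum>k\<in>{k\<in>won \<tau> G i. length g \<le> k}. (G ! k) i)"
proof -
  have u: "won \<tau> G i = (won \<tau> G i \<inter> {..<length g}) \<union> {k\<in>won \<tau> G i. length g \<le> k}" by auto
  have "pay \<tau> G i = (\<Sum>k\<in>won \<tau> G i \<inter> {..<length g}. (G ! k) i) + (\<Sum>k\<in>{k\<in>won \<tau> G i. length g \<le> k}. (G ! k) i)"
    unfolding pay_def by (subst u, rule sum.union_disjoint) auto
  also have "(\<Sum>k\<in>won \<tau> G i \<inter> {..<length g}. (G ! k) i) = pay \<tau> g i"
    unfolding pay_def won_prefix[OF assms] 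
    by (rule sum.cong) (auto simp: won_def prefix_nth[OF assms(1)])
  finally show ?thesis .
qed

lemma pay_ge:
  assumes "take (length g) G = g" "length g \<le> length G"
    and nn: "\<And>k. length g \<le> k \<Longrightarrow> k < length G \<Longrightarrow> 0 \<le> (G ! k) i"
  shows "pay \<tau> G i \<ge> pay \<tau> g i"
    and "k \<in> won \<tau> G i \<Longrightarrow> length g \<le> k \<Longrightarrow> pay \<tau> G i \<ge> pay \<tau> g i + (G ! k) i"
proof -
  have nn': "\<And>k. k \<in> {k\<in>won \<tau> G i. length g \<le> k} \<Longrightarrow> 0 \<le> (G ! k) i"
    using nn won_sub by fastforce
  have "0 \<le> (\<Sum>k\<in>{k\<in>won \<tau> G i. length g \<le> k}. (G ! k) i)" by (rule sum_nonneg) (use nn' in blast)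
  then show "pay \<tau> G i \<ge> pay \<tau> g i" using pay_split[OF assms(1,2)] by simp
  assume "k \<in> won \<tau> G i" "length g \<le> k"
  then have "(G ! k) i \<le> (\<Sum>k\<in>{k\<in>won \<tau> G i. length g \<le> k}. (G ! k) i)"
    by (intro member_le_sum) (use nn' in auto)
  then show "pay \<tau> G i \<ge> pay \<tau> g i + (G ! k) i" using pay_split[OF assms(1,2)] by simp
qed

lemma pay_eq:
  assumes "take (length g) G = g" "length g \<le> length G"
    and z: "\<And>k. length g \<le> k \<Longrightarrow> k < length G \<Longrightarrow> (G ! k) i = 0"
  shows "pay \<tau> G i = pay \<tau> g i"
proof -
  have "(\<Sum>k\<in>{k\<in>won \<tau> G i. length g \<le> k}. (G ! k) i) = 0"
    by (rule sum.neutral) (use z won_sub in fastforce)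
  then show ?thesis using pay_split[OF assms(1,2)] by simp
qed

lemma prof_upd: "i < n \<Longrightarrow> prof n (s(i := s')) g = (prof n s g)(i := s' g)"
  by (auto simp: prof_def)


lemma dev_once:
  assumes "length h < m" "i < n" "\<tau> h ((prof n s h)(i := p)) = i"
  shows "pay \<tau> (play n m (s(i := (\<lambda>g. if g = h then p else 0))) h) i = pay \<tau> h i + p"
    "length h \<in> won \<tau> (play n m (s(i := (\<lambda>g. if g = h then p else 0))) h) i"
proof -
  define s' where "s' = (\<lambda>g::hist. if g = h then p else 0)"
  define b' where "b' = (prof n s h)(i := p)"
  have pb: "prof n (s(i := s')) h = b'" using assms(2) by (simp add: prof_upd b'_def s'_def)
  define H where "H = play n m (s(i := s')) h"
  have HH: "H = play n m (s(i := s')) (h @ [b'])" using play_step[OF assms(1)] pb H_def by simp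
  have c: "length H = m \<and> take (length (h @ [b'])) H = h @ [b'] \<and>
    (\<forall>k. length (h @ [b']) \<le> k \<and> k < m \<longrightarrow> H ! k = prof n (s(i := s')) (take k H))"
    unfolding HH by (rule play_char) (use assms(1) in simp)
  have z: "(H ! k) i = 0" if "length (h @ [b']) \<le> k" "k < length H" for k
  proof -
    have "H ! k = prof n (s(i := s')) (take k H)" using c that by simp
    moreover have "take k H \<noteq> h" using that c by (metis length_take min.absorb2 length_append_singleton
          Suc_n_not_le_n less_imp_le_nat)
    ultimately show ?thesis using assms(2) by (simp add: prof_def s'_def)
  qed
  have "pay \<tau> H i = pay \<tau> (h @ [b']) i" by (rule pay_eq) (use c z assms(1) in auto)
  also have "\<dots> = pay \<tau> h i + p" using assms(3) by (simp add: pay_snoc b'_def)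
  finally show "pay \<tau> (play n m (s(i := (\<lambda>g. if g = h then p else 0))) h) i = pay \<tau> h i + p"
    using H_def s'_def by simp
  have "length h \<in> won \<tau> (h @ [b']) i" using assms(3) by (simp add: won_snoc b'_def)
  moreover have "Suc (length h) \<le> length H" using c assms(1) by simp
  ultimately have "length h \<in> won \<tau> H i" using won_prefix[of "h @ [b']" H \<tau> i] c by auto
  then show "length h \<in> won \<tau> (play n m (s(i := (\<lambda>g. if g = h then p else 0))) h) i"
    using H_def s'_def by simp
qed

lemma dev_zero:
  assumes "length h \<le> m" "i < n"
  shows "pay \<tau> (play n m (s(i := (\<lambda>g. 0))) h) i = pay \<tau> h i"
proof -
  define H where "H = play n m (s(i := (\<lambda>g. 0))) h"
  have c: "length H = m \<and> take (length h) H = h \<and>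
    (\<forall>k. length h \<le> k \<and> k < m \<longrightarrow> H ! k = prof n (s(i := (\<lambda>g. 0))) (take k H))"
    unfolding H_def by (rule play_char) (use assms(1) in simp)
  show ?thesis unfolding H_def[symmetric]
    by (rule pay_eq) (use c assms in \<open>auto simp: prof_def\<close>)
qed

lemma play_pay_ge:
  assumes "length h \<le> m" "i < n" "\<And>g. 0 \<le> s i g"
  shows "pay \<tau> (play n m s h) i \<ge> pay \<tau> h i"
proof -
  define H where "H = play n m s h"
  have c: "length H = m \<and> take (length h) H = h \<and>
    (\<forall>k. length h \<le> k \<and> k < m \<longrightarrow> H ! k = prof n s (take k H))"
    unfolding H_def by (rule play_char) (use assms(1) in simp)
  show ?thesis unfolding H_def[symmetric]
    by (rule pay_ge(1)) (use c assms in \<open>auto simp: prof_def\<close>)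
qed

definition eps :: "nat \<Rightarrow> real" where "eps m = 1 / (real m + 1)^2"
definition val :: "nat \<Rightarrow> nat \<Rightarrow> real" where "val m j = (if j = 0 then 1 else 1 + eps m)"
definition VV :: "nat \<Rightarrow> nat \<Rightarrow> nat \<Rightarrow> real" where
  "VV m i j = (if i = 0 then 1 else if i = Suc j then val m j else 0)"

lemma eps_pos: "eps m > 0" by (simp add: eps_def)
lemma val_ge1: "val m j \<ge> 1" using eps_pos[of m] by (simp add: val_def)
lemma val_gt1: "j \<noteq> 0 \<Longrightarrow> val m j > 1" using eps_pos[of m] by (simp add: val_def)

lemma bval_V0: "bval (VV m) 0 S = (if S = {} then 0 else 1)"
proof (cases "S = {}")
  case False
  then have "VV m 0 ` S = {1}" by (auto simp: VV_def)
  then show ?thesis using False by (simp add: bval_def)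
qed (simp add: bval_def)

lemma bval_Vi:
  assumes "0 < i"
  shows "bval (VV m) i S = (if i - 1 \<in> S then val m (i - 1) else 0)"
proof (cases "S = {}")
  case True then show ?thesis by (simp add: bval_def)
next
  case False
  have sub: "VV m i ` S \<subseteq> {0, val m (i - 1)}" using assms by (auto simp: VV_def)
  then have fin: "finite (VV m i ` S)" by (rule finite_subset) simp
  show ?thesis
  proof (cases "i - 1 \<in> S")
    case True
    have "VV m i (i - 1) = val m (i - 1)" using assms by (simp add: VV_def)
    then have mem: "val m (i - 1) \<in> VV m i ` S" using True by force
    have "Max (VV m i ` S) = val m (i - 1)"
      by (rule Max_eqI[OF fin]) (use sub mem val_ge1[of m "i - 1"] in auto)
    then show ?thesis using True False by (simp add: bval_def)
  next
    case nm: False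
    have "VV m i ` S = {0}" using False nm assms by (auto simp: VV_def)
    then show ?thesis using nm False by (simp add: bval_def)
  qed
qed

lemma bval_nonneg: "bval (VV m) i S \<ge> 0"
  by (cases "i = 0") (auto simp: bval_V0 bval_Vi val_def eps_def)

lemma bval_le: "bval (VV m) 0 S \<le> 1" by (simp add: bval_V0)


lemma VV_nn: "0 \<le> VV m i j" using val_ge1[of m j] by (simp add: VV_def)
lemma VV_le: "VV m i j \<le> 1 + eps m" using eps_pos[of m] by (simp add: VV_def val_def)

lemma bval_le_sum: "finite S \<Longrightarrow> bval (VV m) i S \<le> (\<Sum>j\<in>S. VV m i j)"
proof (cases "S = {}")
  case True then show ?thesis by (simp add: bval_def)
next
  case False
  assume fin: "finite S"
  have "Max (VV m i ` S) \<le> (\<Sum>j\<in>S. VV m i j)"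
  proof (subst Max_le_iff)
    show "finite (VV m i ` S)" using fin by simp
    show "VV m i ` S \<noteq> {}" using False by simp
    show "\<forall>a\<in>VV m i ` S. a \<le> (\<Sum>j\<in>S. VV m i j)"
      using fin by (auto intro!: member_le_sum VV_nn)
  qed
  then show ?thesis using False by (simp add: bval_def)
qed

lemma welfare_le:
  assumes a: "a \<in> {..<m} \<rightarrow>\<^sub>E {..<m + 1}"
  shows "welfare (VV m) (m + 1) m a \<le> real m * (1 + eps m)"
proof -
  have "welfare (VV m) (m + 1) m a \<le> (\<Sum>i<m + 1. \<Sum>j\<in>{j. j < m \<and> a j = i}. VV m i j)"
    unfolding welfare_def by (rule sum_mono) (rule bval_le_sum, simp)
  also have "\<dots> = (\<Sum>i<m + 1. \<Sum>j\<in>{j. j \<in> {..<m} \<and> a j = i}. VV m (a j) j)"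
    by (rule sum.cong) (auto intro!: sum.cong)
  also have "\<dots> = (\<Sum>j<m. VV m (a j) j)"
    by (rule sum.group) (use a in auto)
  also have "\<dots> \<le> (\<Sum>j<m. 1 + eps m)" by (rule sum_mono) (rule VV_le)
  finally show ?thesis by simp
qed

lemma welfare_ge:
  assumes m1: "1 \<le> m"
  shows "\<exists>a\<in>{..<m} \<rightarrow>\<^sub>E {..<m + 1}. real m \<le> welfare (VV m) (m + 1) m a"
proof
  define a where "a = (\<lambda>j. if j < m then Suc j else undefined)"
  show "a \<in> {..<m} \<rightarrow>\<^sub>E {..<m + 1}" unfolding a_def by (rule PiE_I) auto
  define g :: "nat \<Rightarrow> real" where "g i = (if i = 0 then 0 else 1)" for i
  have "(\<Sum>i<Suc m. g i) = g 0 + (\<Sum>i<m. g (Suc i))" by (rule sum.lessThan_Suc_shift)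
  then have gs: "(\<Sum>i<m + 1. g i) = real m" by (simp add: g_def)
  have "(\<Sum>i<m + 1. g i) \<le> welfare (VV m) (m + 1) m a"
    unfolding welfare_def
  proof (rule sum_mono)
    fix i assume i: "i \<in> {..<m + 1}"
    show "g i \<le> bval (VV m) i {j. j < m \<and> a j = i}"
    proof (cases "i = 0")
      case True then show ?thesis using bval_nonneg by (simp add: g_def)
    next
      case False
      have "i - 1 \<in> {j. j < m \<and> a j = i}" using False i by (auto simp: a_def)
      then show ?thesis using False bval_Vi[of i m] val_ge1[of m "i - 1"] by (simp add: g_def)
    qed
  qed
  then show "real m \<le> welfare (VV m) (m + 1) m a" using gs by simp
qed

lemma welfare_lim: "(\<lambda>m. opt_welfare (VV m) (m + 1) m - real m) \<longlonglongrightarrow> 0"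
proof (rule tendsto_sandwich[of "\<lambda>_. 0" _ _ "\<lambda>m. inverse (real (Suc m))"])
  have bnd: "0 \<le> opt_welfare (VV m) (m + 1) m - real m \<and> opt_welfare (VV m) (m + 1) m - real m \<le> inverse (real (Suc m))"
    if m1: "1 \<le> m" for m
  proof -
    let ?A = "welfare (VV m) (m + 1) m ` ({..<m} \<rightarrow>\<^sub>E {..<m + 1})"
    have fin: "finite ?A" by (simp add: finite_PiE)
    obtain a where a: "a \<in> {..<m} \<rightarrow>\<^sub>E {..<m + 1}" "real m \<le> welfare (VV m) (m + 1) m a"
      using welfare_ge[OF m1] by blast
    have ne: "?A \<noteq> {}" using a by blast
    have lo: "real m \<le> Max ?A" using a fin by (meson Max_ge image_eqI order_trans)
    have up: "Max ?A \<le> real m * (1 + eps m)" using fin ne welfare_le by (subst Max_le_iff) auto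
    have "real m * eps m \<le> inverse (real (Suc m))"
    proof -
      have "real m * eps m = real m / (real m + 1)^2" by (simp add: eps_def)
      also have "\<dots> \<le> (real m + 1) / (real m + 1)^2" by (rule divide_right_mono) auto
      also have "\<dots> = inverse (real (Suc m))"
      proof -
        have pos: "real m + 1 \<noteq> 0" by simp
        have "(real m + 1) / (real m + 1)^2 = inverse (real m + 1)"
          using pos by (simp add: power2_eq_square divide_inverse)
        then show ?thesis by simp
      qed
      finally show ?thesis .
    qed
    then show ?thesis using lo up unfolding opt_welfare_def by (simp add: algebra_simps)
  qed
  show "\<forall>\<^sub>F n in sequentially. 0 \<le> opt_welfare (VV n) (n + 1) n - real n"
    using bnd by (intro eventually_sequentiallyI[of 1]) auto
  show "\<forall>\<^sub>F n in sequentially. opt_welfare (VV n) (n + 1) n - real n \<le> inverse (real (Suc n))"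
    using bnd by (intro eventually_sequentiallyI[of 1]) auto
  show "(\<lambda>_. 0::real) \<longlonglongrightarrow> 0" by simp
  show "(\<lambda>m. inverse (real (Suc m))) \<longlonglongrightarrow> 0" by (rule LIMSEQ_inverse_real_of_nat)
qed


definition sig2 :: "nat \<Rightarrow> nat list" where "sig2 m = [1..<m] @ [0]"

lemma sig2_len: "1 \<le> m \<Longrightarrow> length (sig2 m) = m" by (simp add: sig2_def)

lemma sig2_order: "1 \<le> m \<Longrightarrow> is_order m (sig2 m)"
  by (auto simp: is_order_def sig2_def)

lemma sig2_nth: "1 \<le> m \<Longrightarrow> k < m \<Longrightarrow> sig2 m ! k = (if k < m - 1 then Suc k else 0)"
  by (auto simp: sig2_def nth_append)

lemma sig2_inj: "1 \<le> m \<Longrightarrow> k < m \<Longrightarrow> k' < m \<Longrightarrow> sig2 m ! k = sig2 m ! k' \<Longrightarrow> k = k'"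
proof -
  assume a: "1 \<le> m" "k < m" "k' < m" "sig2 m ! k = sig2 m ! k'"
  have "distinct (sig2 m)" "length (sig2 m) = m" using sig2_order[OF a(1)] sig2_len[OF a(1)] by (auto simp: is_order_def)
  then show "k = k'" using a nth_eq_iff_index_eq by metis
qed

lemma sig2_lt: "1 \<le> m \<Longrightarrow> k < m \<Longrightarrow> sig2 m ! k < m"
  by (auto simp: sig2_nth)

lemma sig2_bundle:
  assumes "1 \<le> m" "k < m" "length H = m"
  shows "sig2 m ! k \<in> (\<lambda>k. sig2 m ! k) ` won \<tau> H i \<longleftrightarrow> k \<in> won \<tau> H i"
proof
  assume "sig2 m ! k \<in> (\<lambda>k. sig2 m ! k) ` won \<tau> H i"
  then obtain k' where k': "k' \<in> won \<tau> H i" "sig2 m ! k = sig2 m ! k'" by auto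
  then have "k' < m" using won_sub assms(3) by fastforce
  then show "k \<in> won \<tau> H i" using sig2_inj[OF assms(1,2)] k' by metis
qed auto

context
  fixes m :: nat and \<tau> :: "hist \<Rightarrow> profile \<Rightarrow> nat" and s :: "nat \<Rightarrow> hist \<Rightarrow> real"
  assumes m1: "1 \<le> m" and tie: "tie_rule (m + 1) \<tau>"
    and spe: "is_SPE (m + 1) m (VV m) (sig2 m) \<tau> s"
begin

lemma sp: "i < m + 1 \<Longrightarrow> 0 \<le> s i g"
  using spe by (simp add: is_SPE_def strategy_profile_def)

lemma nash: "valid_hist (m + 1) m h \<Longrightarrow> length h < m \<Longrightarrow> i < m + 1 \<Longrightarrow> (\<And>g. 0 \<le> s' g) \<Longrightarrow>
   utility (VV m) (sig2 m) \<tau> i (play (m + 1) m (s(i := s')) h) \<le> utility (VV m) (sig2 m) \<tau> i (play (m + 1) m s h)"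
  using spe unfolding is_SPE_def by blast

lemma tie': "\<tau> g b < m + 1" "j < m + 1 \<Longrightarrow> b j \<le> b (\<tau> g b)"
  using tie by (auto simp: tie_rule_def)

lemma part2_ind:
  "\<forall>h. valid_hist (m + 1) m h \<and> length h + d = m \<and> won \<tau> h 0 = {} \<longrightarrow>
     revenue \<tau> (play (m + 1) m s h) \<ge> revenue \<tau> h + real d \<and>
     utility (VV m) (sig2 m) \<tau> 0 (play (m + 1) m s h) \<le> 0"
proof (induction d)
  case 0
  show ?case
  proof (intro allI impI)
    fix h assume h: "valid_hist (m + 1) m h \<and> length h + 0 = m \<and> won \<tau> h 0 = {}"
    then have "play (m + 1) m s h = h" by (simp add: play_done)
    then show "revenue \<tau> (play (m + 1) m s h) \<ge> revenue \<tau> h + real 0 \<and>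
     utility (VV m) (sig2 m) \<tau> 0 (play (m + 1) m s h) \<le> 0"
      using h by (simp add: utility_pay pay_def bval_V0)
  qed
next
  case (Suc d)
  show ?case
  proof (intro allI impI)
    fix h assume h: "valid_hist (m + 1) m h \<and> length h + Suc d = m \<and> won \<tau> h 0 = {}"
    define k where "k = length h"
    have km: "k < m" using h k_def by simp
    define b where "b = prof (m + 1) s h"
    define h' where "h' = h @ [b]"
    define w where "w = \<tau> h b"
    have eqp: "play (m + 1) m s h = play (m + 1) m s h'"
      using play_step[of h m "m + 1" s] km k_def h'_def b_def by simp
    have bnn: "0 \<le> b j" for j using sp[of j] by (simp add: b_def prof_def)
    have valid': "valid_hist (m + 1) m h'"
    proof -
      have "\<forall>i. (i < m + 1 \<longrightarrow> 0 \<le> b i) \<and> (m + 1 \<le> i \<longrightarrow> b i = 0)" using sp by (simp add: b_def prof_def)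
      then show ?thesis using h km k_def unfolding valid_hist_def h'_def by auto
    qed
    have wn: "w < m + 1" and wmax: "\<And>j. j < m + 1 \<Longrightarrow> b j \<le> b w" using tie' by (auto simp: w_def)
    have pay0: "pay \<tau> h 0 = 0" using h by (simp add: pay_def)
    have lh': "length h' = Suc k" by (simp add: h'_def k_def)
    define H where "H = play (m + 1) m s h'"
    have cH: "length H = m \<and> take (length h') H = h' \<and>
      (\<forall>k. length h' \<le> k \<and> k < m \<longrightarrow> H ! k = prof (m + 1) s (take k H))"
      unfolding H_def by (rule play_char) (use lh' km in simp)
    have nashh: "utility (VV m) (sig2 m) \<tau> i (play (m + 1) m (s(i := s')) h) \<le> utility (VV m) (sig2 m) \<tau> i H"
      if "i < m + 1" "\<And>g. 0 \<le> s' g" for i s'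
      using nash[of h i s'] h km k_def that eqp H_def by simp
    show "revenue \<tau> (play (m + 1) m s h) \<ge> revenue \<tau> h + real (Suc d) \<and>
     utility (VV m) (sig2 m) \<tau> 0 (play (m + 1) m s h) \<le> 0"
    proof (cases "w = 0")
      case False
      have won': "won \<tau> h' 0 = {}" using h False by (simp add: h'_def won_snoc w_def)
      have IH: "revenue \<tau> H \<ge> revenue \<tau> h' + real d \<and> utility (VV m) (sig2 m) \<tau> 0 H \<le> 0"
        using Suc.IH valid' won' lh' h k_def H_def by auto
      have w1: "1 \<le> b w"
      proof (rule ccontr)
        assume "\<not> 1 \<le> b w"
        then have bw: "b w < 1" by simp
        define p where "p = (b w + 1) / 2"
        have p: "b w < p" "p < 1" "0 \<le> p" using bw bnn[of w] by (auto simp: p_def)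
        have tw: "\<tau> h (b(0 := p)) = 0"
        proof (rule ccontr)
          assume ne: "\<tau> h (b(0 := p)) \<noteq> 0"
          let ?t = "\<tau> h (b(0 := p))"
          have "(b(0 := p)) 0 \<le> (b(0 := p)) ?t" using tie'(2)[of 0 "b(0 := p)" h] by simp
          moreover have "b ?t \<le> b w" using wmax tie'(1)[of h "b(0 := p)"] by simp
          ultimately show False using ne p by simp
        qed
        have tw': "\<tau> h ((prof (m + 1) s h)(0 := p)) = 0" using tw by (simp add: b_def)
        define s' where "s' = (\<lambda>g::hist. if g = h then p else 0)"
        have d1: "pay \<tau> (play (m + 1) m (s(0 := s')) h) 0 = pay \<tau> h 0 + p"
          and d2: "length h \<in> won \<tau> (play (m + 1) m (s(0 := s')) h) 0"
          using dev_once[of h m 0 "m + 1" \<tau> s p] km k_def tw' by (auto simp: s'_def)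
        have "utility (VV m) (sig2 m) \<tau> 0 (play (m + 1) m (s(0 := s')) h) = 1 - p"
          using d1 d2 pay0 by (auto simp: utility_pay bval_V0)
        moreover have "utility (VV m) (sig2 m) \<tau> 0 (play (m + 1) m (s(0 := s')) h) \<le> utility (VV m) (sig2 m) \<tau> 0 H"
          by (rule nashh) (use p in \<open>auto simp: s'_def\<close>)
        ultimately show False using IH p by simp
      qed
      have "revenue \<tau> h' = revenue \<tau> h + b w" by (simp add: h'_def revenue_snoc w_def)
      then show ?thesis using IH w1 eqp H_def by simp
    next
      case True
      define j where "j = sig2 m ! k"
      have jm: "j < m" using sig2_lt[OF m1 km] j_def by simp
      define ow where "ow = Suc j"
      have own: "ow < m + 1" "ow \<noteq> 0" "0 < ow" "ow - 1 = j" using jm by (auto simp: ow_def)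
      define v where "v = val m j"
      have v1: "1 \<le> v" using val_ge1 v_def by simp
      have b0max: "\<And>j'. j' < m + 1 \<Longrightarrow> b j' \<le> b 0" using wmax True by simp
      have lH: "length H = m" using cH by simp
      have Hpref: "take (Suc k) H = h'" using cH lh' by simp
      have v0: "v \<le> b 0"
      proof (rule ccontr)
        assume "\<not> v \<le> b 0"
        then have bv: "b 0 < v" by simp
        define p where "p = (b 0 + v) / 2"
        have p: "b 0 < p" "p < v" "0 \<le> p" using bv bnn[of 0] by (auto simp: p_def)
        have tw: "\<tau> h (b(ow := p)) = ow"
        proof (rule ccontr)
          assume ne: "\<tau> h (b(ow := p)) \<noteq> ow"
          let ?t = "\<tau> h (b(ow := p))"
          have "(b(ow := p)) ow \<le> (b(ow := p)) ?t" using tie'(2)[of ow "b(ow := p)" h] own by simp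
          moreover have "b ?t \<le> b 0" using b0max tie'(1)[of h "b(ow := p)"] by simp
          ultimately show False using ne p by simp
        qed
        have tw': "\<tau> h ((prof (m + 1) s h)(ow := p)) = ow" using tw by (simp add: b_def)
        define s' where "s' = (\<lambda>g::hist. if g = h then p else 0)"
        define Hd where "Hd = play (m + 1) m (s(ow := s')) h"
        have d1: "pay \<tau> Hd ow = pay \<tau> h ow + p"
          and d2: "k \<in> won \<tau> Hd ow"
          using dev_once[of h m ow "m + 1" \<tau> s p] km k_def tw' own by (auto simp: s'_def Hd_def)
        have "j \<in> (\<lambda>k. sig2 m ! k) ` won \<tau> Hd ow" using d2 j_def by blast
        then have "bval (VV m) ow ((\<lambda>k. sig2 m ! k) ` won \<tau> Hd ow) = v"
          using bval_Vi[OF own(3)] own(4) v_def by simp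
        then have ud: "utility (VV m) (sig2 m) \<tau> ow Hd = v - (pay \<tau> h ow + p)"
          using d1 by (simp add: utility_pay)
        have "k \<notin> won \<tau> h' ow" using True own won_sub[of \<tau> h ow] k_def
          by (auto simp: h'_def won_snoc w_def)
        then have "k \<notin> won \<tau> H ow" using won_prefix[of h' H \<tau> ow] Hpref lh' lH km by auto
        then have "j \<notin> (\<lambda>k. sig2 m ! k) ` won \<tau> H ow" using sig2_bundle[OF m1 km lH] j_def by simp
        then have bH: "bval (VV m) ow ((\<lambda>k. sig2 m ! k) ` won \<tau> H ow) = 0"
          using bval_Vi[OF own(3)] own(4) by simp
        have "pay \<tau> H ow \<ge> pay \<tau> h ow"
          using play_pay_ge[of h m ow "m + 1" s \<tau>] km k_def own sp eqp H_def by simp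
        then have uH: "utility (VV m) (sig2 m) \<tau> ow H \<le> - pay \<tau> h ow" using bH by (simp add: utility_pay)
        have "utility (VV m) (sig2 m) \<tau> ow Hd \<le> utility (VV m) (sig2 m) \<tau> ow H"
          unfolding Hd_def by (rule nashh) (use own p in \<open>auto simp: s'_def\<close>)
        then show False using ud uH p by simp
      qed
      have payh': "pay \<tau> h' 0 = b 0" using True pay0 by (simp add: h'_def pay_snoc w_def)
      have pH: "pay \<tau> H 0 \<ge> pay \<tau> h' 0"
        by (rule pay_ge(1)) (use cH lh' km sp in \<open>auto simp: prof_def\<close>)
      have uH0: "utility (VV m) (sig2 m) \<tau> 0 H \<le> 1 - b 0"
        using pH payh' bval_le[of m "(\<lambda>k. sig2 m ! k) ` won \<tau> H 0"] by (simp add: utility_pay)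
      have kl: "k = m - 1"
      proof (rule ccontr)
        assume "k \<noteq> m - 1"
        then have "k < m - 1" using km by simp
        then have "j \<noteq> 0" using sig2_nth[OF m1 km] j_def by simp
        then have v1': "1 < v" using val_gt1 v_def by simp
        have "pay \<tau> (play (m + 1) m (s(0 := (\<lambda>g. 0))) h) 0 = 0"
          using dev_zero[of h m 0 "m + 1" \<tau> s] km k_def pay0 by simp
        then have "0 \<le> utility (VV m) (sig2 m) \<tau> 0 (play (m + 1) m (s(0 := (\<lambda>g. 0))) h)"
          using bval_nonneg by (simp add: utility_pay)
        also have "\<dots> \<le> utility (VV m) (sig2 m) \<tau> 0 H" by (rule nashh) auto
        finally show False using uH0 v0 v1' by simp
      qed
      then have d0: "d = 0" using h k_def km by simp
      then have "H = h'" using play_done[of m h' "m + 1" s] lh' kl km H_def by simp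
      moreover have "revenue \<tau> h' = revenue \<tau> h + b 0" using True by (simp add: h'_def revenue_snoc w_def)
      ultimately show ?thesis using v0 v1 uH0 d0 eqp H_def by simp
    qed
  qed
qed

lemma part2: "revenue \<tau> (play (m + 1) m s []) \<ge> real m"
  using part2_ind[of m] by (simp add: valid_hist_def won_def revenue_def)

end

definition tau1 :: "nat \<Rightarrow> hist \<Rightarrow> profile \<Rightarrow> nat" where
  "tau1 n g b = (if length g = 0 \<and> (\<forall>j<n. b j \<le> b 0) then 0
     else if Suc (length g) < n \<and> (\<forall>j<n. b j \<le> b (Suc (length g))) then Suc (length g)
     else (SOME i. i < n \<and> (\<forall>j<n. b j \<le> b i)))"

lemma ex_max: "0 < (n::nat) \<Longrightarrow> \<exists>i<n. \<forall>j<n. b j \<le> (b i :: real)"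
proof -
  assume n: "0 < n"
  have fin: "finite (b ` {..<n})" by simp
  have "Max (b ` {..<n}) \<in> b ` {..<n}" using n by (intro Max_in) auto
  then obtain i where i: "i < n" "b i = Max (b ` {..<n})" by auto
  then show ?thesis by (intro exI[of _ i]) auto
qed

lemma tau1_max: "0 < n \<Longrightarrow> tau1 n g b < n \<and> (\<forall>j<n. b j \<le> b (tau1 n g b))"
proof -
  assume n: "0 < n"
  have "\<exists>i. i < n \<and> (\<forall>j<n. b j \<le> b i)" using ex_max[OF n] by blast
  then have S: "(SOME i. i < n \<and> (\<forall>j<n. b j \<le> b i)) < n \<and> (\<forall>j<n. b j \<le> b (SOME i. i < n \<and> (\<forall>j<n. b j \<le> b i)))"
    by (rule someI_ex)
  then show ?thesis using n unfolding tau1_def by auto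
qed

lemma tau1_tie: "0 < n \<Longrightarrow> tie_rule n (tau1 n)"
  using tau1_max unfolding tie_rule_def by blast

lemma tau1_T2: "1 \<le> length g \<Longrightarrow> Suc (length g) < n \<Longrightarrow> (\<forall>j<n. b j \<le> b (Suc (length g))) \<Longrightarrow> tau1 n g b = Suc (length g)"
  by (auto simp: tau1_def)

lemma tau1_T3: "g = [] \<Longrightarrow> (\<forall>j<n. b j \<le> b 0) \<Longrightarrow> tau1 n g b = 0"
  by (simp add: tau1_def)


definition s1 :: "nat \<Rightarrow> nat \<Rightarrow> hist \<Rightarrow> real" where
  "s1 m i g = (if won (tau1 (m + 1)) g 0 = {} \<and> (i = 0 \<or> i = Suc (length g)) then 1 else 0)"

definition sig1 :: "nat \<Rightarrow> nat list" where "sig1 m = [0..<m]"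

lemma s1_nn: "0 \<le> s1 m i g" by (simp add: s1_def)

lemma bundle1: "length H = m \<Longrightarrow> (\<lambda>k. sig1 m ! k) ` won \<tau> H i = won \<tau> H i"
proof -
  assume l: "length H = m"
  have "\<And>k. k \<in> won \<tau> H i \<Longrightarrow> sig1 m ! k = k" using won_sub[of \<tau> H i] l by (auto simp: sig1_def)
  then show ?thesis by (simp add: image_cong)
qed

lemma take_won: "k \<le> length G \<Longrightarrow> won \<tau> (take k G) i = won \<tau> G i \<inter> {..<k}"
proof -
  assume k: "k \<le> length G"
  then have "length (take k G) = k" by simp
  then show ?thesis using won_prefix[of "take k G" G \<tau> i] k by simp
qed

lemma won_take_Suc: "k < length G \<Longrightarrow> won \<tau> (take (Suc k) G) i =
    won \<tau> (take k G) i \<union> (if \<tau> (take k G) (G ! k) = i then {k} else {})"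
  by (simp add: take_Suc_conv_app_nth won_snoc)

lemma bval_mono_i: "0 < i \<Longrightarrow> (i - 1 \<in> S' \<longrightarrow> i - 1 \<in> S) \<Longrightarrow> bval (VV m) i S' \<le> bval (VV m) i S"
  using val_ge1[of m "i - 1"] by (auto simp: bval_Vi)

lemma bval_le_val: "0 < i \<Longrightarrow> bval (VV m) i S \<le> val m (i - 1)"
  using val_ge1[of m "i - 1"] by (auto simp: bval_Vi)

context
  fixes m :: nat
  assumes m1: "1 \<le> m"
begin

abbreviation "t \<equiv> tau1 (m + 1)"

lemma tmax: "t g b < m + 1" "j < m + 1 \<Longrightarrow> b j \<le> b (t g b)"
  using tau1_max[of "m + 1" g b] by auto

lemma regB_persist:
  assumes len: "length G = m" and k1: "1 \<le> k" and KK: "K \<le> m"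
    and base: "won t (take k G) 0 = {}"
    and bids: "\<And>k'. k \<le> k' \<Longrightarrow> k' < K \<Longrightarrow> won t (take k' G) 0 = {} \<Longrightarrow> (G ! k') 0 = 1 \<and> (G ! k') (Suc k') = 1"
  shows "k + d \<le> K \<Longrightarrow> won t (take (k + d) G) 0 = {}"
proof (induction d)
  case 0 then show ?case using base by simp
next
  case (Suc d)
  have IH: "won t (take (k + d) G) 0 = {}" using Suc by simp
  have lt: "k + d < length G" using Suc KK len by simp
  have b: "(G ! (k + d)) 0 = 1" "(G ! (k + d)) (Suc (k + d)) = 1" using bids[of "k + d"] IH Suc by auto
  have "t (take (k + d) G) (G ! (k + d)) \<noteq> 0"
  proof
    assume t0: "t (take (k + d) G) (G ! (k + d)) = 0"
    have mx: "\<forall>j<m + 1. (G ! (k + d)) j \<le> (G ! (k + d)) (Suc (k + d))"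
      using tmax(2)[of _ "G ! (k + d)" "take (k + d) G"] t0 b by auto
    have "t (take (k + d) G) (G ! (k + d)) = Suc (length (take (k + d) G))"
      by (rule tau1_T2) (use lt len k1 mx in auto)
    then show False using t0 by simp
  qed
  then show ?case using won_take_Suc[OF lt, of t 0] IH by simp
qed

lemma prof_s1: "prof (m + 1) (s1 m) g j = (if j < m + 1 \<and> won t g 0 = {} \<and> (j = 0 \<or> j = Suc (length g)) then 1 else 0)"
  by (auto simp: prof_def s1_def)

lemma prof_s1_le1: "prof (m + 1) (s1 m) g j \<le> 1" by (simp add: prof_def s1_def)

lemma won_mono_take: "take (length h) G = h \<Longrightarrow> length h \<le> k' \<Longrightarrow> k' \<le> length G \<Longrightarrow> won \<tau> h i \<subseteq> won \<tau> (take k' G) i"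
proof -
  assume a: "take (length h) G = h" "length h \<le> k'" "k' \<le> length G"
  have "won \<tau> h i = won \<tau> G i \<inter> {..<length h}" using won_prefix[of h G \<tau> i] a by simp
  also have "\<dots> \<subseteq> won \<tau> G i \<inter> {..<k'}" using a by auto
  also have "\<dots> = won \<tau> (take k' G) i" using take_won[of k' G \<tau> i] a by simp
  finally show ?thesis .
qed

lemma playA:
  assumes lh: "length h \<le> m" and A: "won t h 0 \<noteq> {}" and G: "G = play (m + 1) m (s1 m) h"
    and k': "length h \<le> k'" "k' < m"
  shows "\<And>j. (G ! k') j = 0" "t (take k' G) (G ! k') = Suc k'"
proof -
  have cG: "length G = m \<and> take (length h) G = h \<and>
    (\<forall>k. length h \<le> k \<and> k < m \<longrightarrow> G ! k = prof (m + 1) (s1 m) (take k G))"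
    unfolding G by (rule play_char) (rule lh)
  have "won t h 0 \<subseteq> won t (take k' G) 0" by (rule won_mono_take) (use cG k' in auto)
  then have wA: "won t (take k' G) 0 \<noteq> {}" using A by auto
  have l1: "1 \<le> length h" using A won_sub[of t h 0] by (cases "length h") auto
  have Gk: "G ! k' = prof (m + 1) (s1 m) (take k' G)" using cG k' by simp
  show z: "\<And>j. (G ! k') j = 0" using wA Gk by (simp add: prof_def s1_def)
  show "t (take k' G) (G ! k') = Suc k'"
    using tau1_T2[of "take k' G" "m + 1" "G ! k'"] z l1 k' cG by simp
qed

lemma playB:
  assumes l1: "1 \<le> length h" and lh: "length h \<le> m" and B: "won t h 0 = {}" and G: "G = play (m + 1) m (s1 m) h"
  shows "\<And>k'. length h \<le> k' \<Longrightarrow> k' \<le> m \<Longrightarrow> won t (take k' G) 0 = {}"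
    and "\<And>k'. length h \<le> k' \<Longrightarrow> k' < m \<Longrightarrow> t (take k' G) (G ! k') = Suc k' \<and> (G ! k') (Suc k') = 1
          \<and> (G ! k') 0 = 1 \<and> (\<forall>j. j \<noteq> Suc k' \<longrightarrow> j \<noteq> 0 \<longrightarrow> (G ! k') j = 0)"
proof -
  have cG: "length G = m \<and> take (length h) G = h \<and>
    (\<forall>k. length h \<le> k \<and> k < m \<longrightarrow> G ! k = prof (m + 1) (s1 m) (take k G))"
    unfolding G by (rule play_char) (rule lh)
  have P: "won t (take (length h + d) G) 0 = {}" if "length h + d \<le> m" for d
  proof (rule regB_persist[of G "length h" m])
    show "won t (take (length h) G) 0 = {}" using cG B by simp
    fix k' assume "length h \<le> k'" "k' < m" "won t (take k' G) 0 = {}"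
    then show "(G ! k') 0 = 1 \<and> (G ! k') (Suc k') = 1" using cG by (simp add: prof_def s1_def)
  qed (use cG l1 that in auto)
  show W: "\<And>k'. length h \<le> k' \<Longrightarrow> k' \<le> m \<Longrightarrow> won t (take k' G) 0 = {}"
    using P by (metis le_add_diff_inverse)
  fix k' assume k': "length h \<le> k'" "k' < m"
  have Gk: "G ! k' = prof (m + 1) (s1 m) (take k' G)" using cG k' by simp
  have w: "won t (take k' G) 0 = {}" using W k' by simp
  have bids: "(G ! k') (Suc k') = 1" "(G ! k') 0 = 1" "\<forall>j. j \<noteq> Suc k' \<longrightarrow> j \<noteq> 0 \<longrightarrow> (G ! k') j = 0"
    using Gk w k' cG by (auto simp: prof_def s1_def)
  have "\<forall>j<m + 1. (G ! k') j \<le> (G ! k') (Suc (length (take k' G)))"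
    using Gk prof_s1_le1 bids k' cG by simp
  then have "t (take k' G) (G ! k') = Suc k'"
    using tau1_T2[of "take k' G" "m + 1" "G ! k'"] l1 k' cG by simp
  then show "t (take k' G) (G ! k') = Suc k' \<and> (G ! k') (Suc k') = 1
          \<and> (G ! k') 0 = 1 \<and> (\<forall>j. j \<noteq> Suc k' \<longrightarrow> j \<noteq> 0 \<longrightarrow> (G ! k') j = 0)" using bids by simp
qed

lemma playNil:
  assumes G: "G = play (m + 1) m (s1 m) []"
  shows "t [] (G ! 0) = 0" "(G ! 0) 0 = 1" "(G ! 0) (Suc 0) = 1" "\<And>j. 2 \<le> j \<Longrightarrow> (G ! 0) j = 0"
    and "\<And>k'. 1 \<le> k' \<Longrightarrow> k' < m \<Longrightarrow> (\<forall>j. (G ! k') j = 0) \<and> t (take k' G) (G ! k') = Suc k'"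
    and "length G = m"
proof -
  have cG: "length G = m \<and> take 0 G = [] \<and>
    (\<forall>k. 0 \<le> k \<and> k < m \<longrightarrow> G ! k = prof (m + 1) (s1 m) (take k G))"
    using play_char[of "[]" m "m + 1" "s1 m"] G by simp
  then show "length G = m" by simp
  have G0: "G ! 0 = prof (m + 1) (s1 m) []" using cG m1 by auto
  have w0: "won t [] 0 = {}" by (simp add: won_def)
  show b0: "(G ! 0) 0 = 1" "(G ! 0) (Suc 0) = 1" "\<And>j. 2 \<le> j \<Longrightarrow> (G ! 0) j = 0"
    using G0 w0 m1 by (auto simp: prof_def s1_def)
  have "\<forall>j<m + 1. (G ! 0) j \<le> (G ! 0) 0" using G0 prof_s1_le1 b0 by simp
  then show t0: "t [] (G ! 0) = 0" by (simp add: tau1_T3)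
  have w1: "0 \<in> won t G 0" using t0 cG m1 by (auto simp: won_def)
  fix k' assume k': "1 \<le> k'" "k' < m"
  have "0 \<in> won t (take k' G) 0" using take_won[of k' G t 0] w1 k' cG by simp
  then have wA: "won t (take k' G) 0 \<noteq> {}" by blast
  have Gk: "G ! k' = prof (m + 1) (s1 m) (take k' G)" using cG k' by simp
  have z: "\<forall>j. (G ! k') j = 0" using wA Gk by (simp add: prof_def s1_def)
  moreover have "t (take k' G) (G ! k') = Suc k'"
    using tau1_T2[of "take k' G" "m + 1" "G ! k'"] z k' cG by simp
  ultimately show "(\<forall>j. (G ! k') j = 0) \<and> t (take k' G) (G ! k') = Suc k'" by simp
qed

lemma U_eq: "length G = m \<Longrightarrow> utility (VV m) (sig1 m) \<tau> i G = bval (VV m) i (won \<tau> G i) - pay \<tau> G i"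
  by (simp add: utility_pay bundle1)

lemma dev_char:
  assumes lh: "length h \<le> m" and i: "i < m + 1" and G: "G = play (m + 1) m ((s1 m)(i := s')) h"
  shows "length G = m" "take (length h) G = h"
    "\<And>k. length h \<le> k \<Longrightarrow> k < m \<Longrightarrow> (G ! k) i = s' (take k G)"
    "\<And>k j. length h \<le> k \<Longrightarrow> k < m \<Longrightarrow> j \<noteq> i \<Longrightarrow> (G ! k) j = prof (m + 1) (s1 m) (take k G) j"
proof -
  have cG: "length G = m \<and> take (length h) G = h \<and>
    (\<forall>k. length h \<le> k \<and> k < m \<longrightarrow> G ! k = prof (m + 1) ((s1 m)(i := s')) (take k G))"
    unfolding G by (rule play_char) (rule lh)
  then show "length G = m" "take (length h) G = h" by auto
  show "\<And>k. length h \<le> k \<Longrightarrow> k < m \<Longrightarrow> (G ! k) i = s' (take k G)" using cG i by (simp add: prof_def)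
  show "\<And>k j. length h \<le> k \<Longrightarrow> k < m \<Longrightarrow> j \<noteq> i \<Longrightarrow> (G ! k) j = prof (m + 1) (s1 m) (take k G) j"
    using cG by (simp add: prof_def)
qed

lemma caseA:
  assumes lh: "length h < m" and A: "won t h 0 \<noteq> {}" and i: "i < m + 1" and nn: "\<And>g. 0 \<le> s' g"
  shows "utility (VV m) (sig1 m) t i (play (m + 1) m ((s1 m)(i := s')) h)
       \<le> utility (VV m) (sig1 m) t i (play (m + 1) m (s1 m) h)"
proof -
  define H where "H = play (m + 1) m (s1 m) h"
  define H' where "H' = play (m + 1) m ((s1 m)(i := s')) h"
  have cH: "length H = m \<and> take (length h) H = h \<and>
    (\<forall>k. length h \<le> k \<and> k < m \<longrightarrow> H ! k = prof (m + 1) (s1 m) (take k H))"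
    unfolding H_def by (rule play_char) (use lh in simp)
  have cH': "length H' = m" "take (length h) H' = h"
    "\<And>k. length h \<le> k \<Longrightarrow> k < m \<Longrightarrow> (H' ! k) i = s' (take k H')"
    using dev_char[of h i H' s'] lh i H'_def by auto
  have pH: "pay t H i = pay t h i"
    by (rule pay_eq) (use cH lh playA(1)[of h H] A H_def in auto)
  have pH': "pay t H' i \<ge> pay t h i"
    by (rule pay_ge(1)) (use cH' lh nn in auto)
  have bv: "bval (VV m) i (won t H' i) \<le> bval (VV m) i (won t H i)"
  proof (cases "i = 0")
    case True
    have "won t h 0 \<subseteq> won t H 0" using won_prefix[of h H t 0] cH lh by auto
    then have "won t H 0 \<noteq> {}" using A by auto
    then show ?thesis using True by (simp add: bval_V0)
  next
    case False
    show ?thesis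
    proof (rule bval_mono_i)
      show "0 < i" using False by simp
      show "i - 1 \<in> won t H' i \<longrightarrow> i - 1 \<in> won t H i"
      proof (cases "i - 1 < length h")
        case True
        have "won t H' i \<inter> {..<length h} = won t h i" using won_prefix[of h H' t i] cH' lh by simp
        moreover have "won t H i \<inter> {..<length h} = won t h i" using won_prefix[of h H t i] cH lh by simp
        ultimately show ?thesis using True by blast
      next
        case nt: False
        have "t (take (i - 1) H) (H ! (i - 1)) = Suc (i - 1)"
          using playA(2)[of h H "i - 1"] lh A H_def nt i False by simp
        then have "i - 1 \<in> won t H i" using False i cH by (simp add: won_def)
        then show ?thesis by simp
      qed
    qed
  qed
  show ?thesis using U_eq[of H t i] U_eq[of H' t i] cH cH' pH pH' bv H_def H'_def by simp
qed

lemma UH0_nn: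
  assumes lh: "length h < m" and B: "won t h 0 = {}"
  shows "0 \<le> utility (VV m) (sig1 m) t 0 (play (m + 1) m (s1 m) h)"
proof -
  define H where "H = play (m + 1) m (s1 m) h"
  have cH: "length H = m \<and> take (length h) H = h \<and>
    (\<forall>k. length h \<le> k \<and> k < m \<longrightarrow> H ! k = prof (m + 1) (s1 m) (take k H))"
    unfolding H_def by (rule play_char) (use lh in simp)
  show ?thesis
  proof (cases "h = []")
    case True
    have HN: "H = play (m + 1) m (s1 m) []" using H_def True by simp
    note N = playNil[OF HN]
    have "won t H 0 = {0}"
    proof (rule set_eqI)
      fix k show "k \<in> won t H 0 \<longleftrightarrow> k \<in> {0}"
      proof (cases "k = 0")
        case True then show ?thesis using N m1 by (simp add: won_def)
      next
        case False
        have "k < m \<Longrightarrow> t (take k H) (H ! k) = Suc k" using N(5)[of k] False by simp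
        then show ?thesis using False cH by (auto simp: won_def)
      qed
    qed
    then have "pay t H 0 = 1" using N by (simp add: pay_def)
    moreover have "bval (VV m) 0 (won t H 0) = 1" using \<open>won t H 0 = {0}\<close> by (simp add: bval_V0)
    ultimately have "utility (VV m) (sig1 m) t 0 H = 0" using U_eq[of H t 0] cH by simp
    then show ?thesis using H_def by simp
  next
    case False
    then have "1 \<le> length h" by (cases h) auto
    then have "won t (take m H) 0 = {}" using playB(1)[of h H m] lh B H_def by simp
    then have "won t H 0 = {}" using cH by simp
    then have "utility (VV m) (sig1 m) t 0 H = 0" using U_eq[of H t 0] cH by (simp add: pay_def bval_V0)
    then show ?thesis using H_def by simp
  qed
qed

lemma caseB0:
  assumes lh: "length h < m" and B: "won t h 0 = {}" and nn: "\<And>g. 0 \<le> s' g"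
  shows "utility (VV m) (sig1 m) t 0 (play (m + 1) m ((s1 m)(0 := s')) h)
       \<le> utility (VV m) (sig1 m) t 0 (play (m + 1) m (s1 m) h)"
proof -
  define H' where "H' = play (m + 1) m ((s1 m)(0 := s')) h"
  have cH': "length H' = m" "take (length h) H' = h"
    "\<And>k. length h \<le> k \<Longrightarrow> k < m \<Longrightarrow> (H' ! k) 0 = s' (take k H')"
    "\<And>k j. length h \<le> k \<Longrightarrow> k < m \<Longrightarrow> j \<noteq> 0 \<Longrightarrow> (H' ! k) j = prof (m + 1) (s1 m) (take k H') j"
    using dev_char[of h 0 H' s'] lh H'_def by auto
  have "utility (VV m) (sig1 m) t 0 H' \<le> 0"
  proof (cases "won t H' 0 = {}")
    case True
    then show ?thesis using U_eq[of H' t 0] cH' by (simp add: pay_def bval_V0)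
  next
    case False
    define k0 where "k0 = Min (won t H' 0)"
    have k0w: "k0 \<in> won t H' 0" unfolding k0_def by (rule Min_in[OF finite_won False])
    have k0min: "\<And>k. k \<in> won t H' 0 \<Longrightarrow> k0 \<le> k" unfolding k0_def by (rule Min_le[OF finite_won])
    have k0m: "k0 < m" using k0w won_sub[of t H' 0] cH' by auto
    have k0h: "length h \<le> k0"
    proof (rule ccontr)
      assume "\<not> length h \<le> k0"
      then have "k0 \<in> won t H' 0 \<inter> {..<length h}" using k0w by simp
      moreover have "won t H' 0 \<inter> {..<length h} = won t h 0" using won_prefix[of h H' t 0] cH' lh by simp
      ultimately show False using B by blast
    qed
    have "won t (take k0 H') 0 = won t H' 0 \<inter> {..<k0}" using take_won[of k0 H' t 0] k0m cH' by simp
    then have wk0: "won t (take k0 H') 0 = {}" using k0min by (auto simp: not_less[symmetric])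
    have bo: "(H' ! k0) (Suc k0) = 1" using cH'(4)[of k0 "Suc k0"] k0h k0m wk0 cH'
      by (simp add: prof_def s1_def)
    have t0: "t (take k0 H') (H' ! k0) = 0" using k0w by (simp add: won_def)
    have "(H' ! k0) (Suc k0) \<le> (H' ! k0) 0" using tmax(2)[of "Suc k0" "H' ! k0" "take k0 H'"] t0 k0m by simp
    then have b1: "1 \<le> (H' ! k0) 0" using bo by simp
    have "pay t H' 0 \<ge> pay t h 0 + (H' ! k0) 0"
      by (rule pay_ge(2)) (use cH' lh nn k0w k0h in auto)
    moreover have "pay t h 0 = 0" using B by (simp add: pay_def)
    ultimately show ?thesis using U_eq[of H' t 0] cH' b1 bval_le[of m "won t H' 0"] by simp
  qed
  then show ?thesis using UH0_nn[OF lh B] H'_def by simp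
qed

lemma caseNil:
  assumes i: "0 < i" "i < m + 1" and nn: "\<And>g. 0 \<le> s' g"
  shows "utility (VV m) (sig1 m) t i (play (m + 1) m ((s1 m)(i := s')) [])
       \<le> utility (VV m) (sig1 m) t i (play (m + 1) m (s1 m) [])"
proof -
  define H where "H = play (m + 1) m (s1 m) []"
  define H' where "H' = play (m + 1) m ((s1 m)(i := s')) []"
  note N = playNil[OF H_def]
  have cH': "length H' = m" "take 0 H' = []"
    "\<And>k. k < m \<Longrightarrow> (H' ! k) i = s' (take k H')"
    "\<And>k j. k < m \<Longrightarrow> j \<noteq> i \<Longrightarrow> (H' ! k) j = prof (m + 1) (s1 m) (take k H') j"
    using dev_char[of "[]" i H' s'] i H'_def by auto
  have pnil: "pay t [] i = 0" by (simp add: pay_def won_def)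
  have pH': "pay t H' i \<ge> 0"
    using pay_ge(1)[of "[]" H' i t] cH' nn pnil by simp
  have "utility (VV m) (sig1 m) t i H' \<le> utility (VV m) (sig1 m) t i H"
  proof (cases "i = 1")
    case False
    then have i2: "2 \<le> i" using i by simp
    have "t (take (i - 1) H) (H ! (i - 1)) = Suc (i - 1)" using N(5)[of "i - 1"] i2 i by simp
    then have w: "i - 1 \<in> won t H i" using i2 i N(6) by (simp add: won_def)
    have z: "(H ! k) i = 0" if "k < m" for k
    proof (cases "k = 0")
      case True then show ?thesis using N(4) i2 by simp
    next
      case False then show ?thesis using N(5)[of k] that by simp
    qed
    have "pay t H i = pay t [] i" by (rule pay_eq) (use N(6) z in auto)
    then have UH: "utility (VV m) (sig1 m) t i H = val m (i - 1)"
      using U_eq[of H t i] N(6) w pnil bval_Vi[of i m] i by simp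
    have "utility (VV m) (sig1 m) t i H' = bval (VV m) i (won t H' i) - pay t H' i" using U_eq[of H' t i] cH' by simp
    moreover have "bval (VV m) i (won t H' i) \<le> val m (i - 1)" using bval_le_val[of i m] i by simp
    ultimately show ?thesis using pH' UH by simp
  next
    case True
    have "won t H 1 = {}"
    proof (rule equals0I)
      fix k assume k: "k \<in> won t H 1"
      then have km: "k < m" and tk: "t (take k H) (H ! k) = 1" using N(6) by (auto simp: won_def)
      show False
      proof (cases "k = 0")
        case True then show False using tk N(1) by simp
      next
        case False then show False using tk N(5)[of k] km by simp
      qed
    qed
    then have UH: "utility (VV m) (sig1 m) t 1 H = 0" using U_eq[of H t 1] N(6) by (simp add: pay_def bval_Vi)
    have "utility (VV m) (sig1 m) t 1 H' \<le> 0"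
    proof (cases "0 \<in> won t H' 1")
      case True
      define b where "b = H' ! 0"
      have tb: "t [] b = 1" using True by (simp add: won_def b_def)
      have b0: "b 0 = 1" using cH'(4)[of 0 0] m1 True \<open>i = 1\<close> by (simp add: b_def prof_def s1_def won_def)
      have "\<not> (\<forall>j<m + 1. b j \<le> b 0)" using tau1_T3[of "[]" "m + 1" b] tb by auto
      then obtain j where j: "j < m + 1" "b 0 < b j" by auto
      have "b j \<le> b 1" using tmax(2)[of j b "[]"] tb j by simp
      then have b1: "1 < b 1" using j b0 by simp
      have "pay t H' 1 \<ge> pay t [] 1 + (H' ! 0) 1"
        by (rule pay_ge(2)) (use cH' nn True \<open>i = 1\<close> in auto)
      then have "pay t H' 1 > 1" using b1 pnil \<open>i = 1\<close> by (simp add: b_def)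
      moreover have "bval (VV m) 1 (won t H' 1) \<le> 1" using bval_le_val[of 1 m] by (simp add: val_def)
      ultimately show ?thesis using U_eq[of H' t 1] cH' by simp
    next
      case False
      then show ?thesis using U_eq[of H' t 1] cH' pH' \<open>i = 1\<close> by (simp add: bval_Vi)
    qed
    then show ?thesis using UH True by simp
  qed
  then show ?thesis using H_def H'_def by simp
qed

lemma casePos:
  assumes lh: "length h < m" and l1: "1 \<le> length h" and B: "won t h 0 = {}"
    and i: "0 < i" "i < m + 1" and nn: "\<And>g. 0 \<le> s' g"
  shows "utility (VV m) (sig1 m) t i (play (m + 1) m ((s1 m)(i := s')) h)
       \<le> utility (VV m) (sig1 m) t i (play (m + 1) m (s1 m) h)"
proof -
  define H where "H = play (m + 1) m (s1 m) h"
  define H' where "H' = play (m + 1) m ((s1 m)(i := s')) h"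
  have cH: "length H = m \<and> take (length h) H = h \<and>
    (\<forall>k. length h \<le> k \<and> k < m \<longrightarrow> H ! k = prof (m + 1) (s1 m) (take k H))"
    unfolding H_def by (rule play_char) (use lh in simp)
  have PB: "\<And>k'. length h \<le> k' \<Longrightarrow> k' < m \<Longrightarrow> t (take k' H) (H ! k') = Suc k' \<and> (H ! k') (Suc k') = 1
          \<and> (H ! k') 0 = 1 \<and> (\<forall>j. j \<noteq> Suc k' \<longrightarrow> j \<noteq> 0 \<longrightarrow> (H ! k') j = 0)"
    using playB(2)[OF l1 _ B H_def] lh by simp
  have cH': "length H' = m" "take (length h) H' = h"
    "\<And>k. length h \<le> k \<Longrightarrow> k < m \<Longrightarrow> (H' ! k) i = s' (take k H')"
    "\<And>k j. length h \<le> k \<Longrightarrow> k < m \<Longrightarrow> j \<noteq> i \<Longrightarrow> (H' ! k) j = prof (m + 1) (s1 m) (take k H') j"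
    using dev_char[of h i H' s'] lh i H'_def by auto
  have pH': "pay t H' i \<ge> pay t h i"
    by (rule pay_ge(1)) (use cH' lh nn in auto)
  have wH': "won t H' i \<inter> {..<length h} = won t h i" using won_prefix[of h H' t i] cH' lh by simp
  have wH: "won t H i \<inter> {..<length h} = won t h i" using won_prefix[of h H t i] cH lh by simp
  have "utility (VV m) (sig1 m) t i H' \<le> utility (VV m) (sig1 m) t i H"
  proof (cases "i - 1 < length h")
    case True
    have z: "(H ! k) i = 0" if "length h \<le> k" "k < m" for k
      using PB[of k] that True i by auto
    have pH: "pay t H i = pay t h i" by (rule pay_eq) (use cH z lh in auto)
    have "bval (VV m) i (won t H' i) \<le> bval (VV m) i (won t H i)"
      by (rule bval_mono_i) (use i True wH wH' in blast)+
    then show ?thesis using U_eq[of H t i] U_eq[of H' t i] cH cH' pH pH' by simp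
  next
    case False
    have im: "i - 1 < m" using i by simp
    have wi: "i - 1 \<in> won t H i" using PB[of "i - 1"] False im i cH by (simp add: won_def)
    have F: "{k \<in> won t H i. length h \<le> k} = {i - 1}"
    proof (rule set_eqI)
      fix k
      show "k \<in> {k \<in> won t H i. length h \<le> k} \<longleftrightarrow> k \<in> {i - 1}"
      proof
        assume "k \<in> {k \<in> won t H i. length h \<le> k}"
        then have "k < m" "t (take k H) (H ! k) = i" "length h \<le> k" using cH by (auto simp: won_def)
        then show "k \<in> {i - 1}" using PB[of k] by simp
      qed (use wi False in auto)
    qed
    have pH: "pay t H i = pay t h i + 1"
      using pay_split[of h H t i] cH lh F PB[of "i - 1"] False im i by simp
    have UH: "utility (VV m) (sig1 m) t i H = val m (i - 1) - (pay t h i + 1)"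
      using U_eq[of H t i] cH pH wi bval_Vi[of i m] i by simp
    have reg: "won t (take (length h + d) H') 0 = {}" if "length h + d \<le> i - 1" for d
    proof (rule regB_persist[of H' "length h" "i - 1"])
      show "won t (take (length h) H') 0 = {}" using cH' B by simp
      fix k' assume k': "length h \<le> k'" "k' < i - 1" "won t (take k' H') 0 = {}"
      then show "(H' ! k') 0 = 1 \<and> (H' ! k') (Suc k') = 1"
        using cH'(4)[of k' 0] cH'(4)[of k' "Suc k'"] i im cH' by (simp add: prof_def s1_def)
    qed (use cH' l1 that im in auto)
    have e: "length h + (i - 1 - length h) = i - 1" using False by simp
    have regi: "won t (take (i - 1) H') 0 = {}" using reg[of "i - 1 - length h"] unfolding e by simp
    show ?thesis
    proof (cases "i - 1 \<in> won t H' i")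
      case True
      have b0: "(H' ! (i - 1)) 0 = 1" using cH'(4)[of "i - 1" 0] regi False im i cH' by (simp add: prof_def s1_def)
      have "t (take (i - 1) H') (H' ! (i - 1)) = i" using True by (simp add: won_def)
      then have "(H' ! (i - 1)) 0 \<le> (H' ! (i - 1)) i" using tmax(2)[of 0 "H' ! (i - 1)" "take (i - 1) H'"] by simp
      then have bi: "1 \<le> (H' ! (i - 1)) i" using b0 by simp
      have "pay t H' i \<ge> pay t h i + (H' ! (i - 1)) i"
        by (rule pay_ge(2)) (use cH' lh nn True False in auto)
      moreover have "bval (VV m) i (won t H' i) \<le> val m (i - 1)" using bval_le_val[of i m] i by simp
      ultimately show ?thesis using U_eq[of H' t i] cH' UH bi by simp
    next
      case nw: False
      have "bval (VV m) i (won t H' i) = 0" using nw bval_Vi[of i m] i by simp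
      then show ?thesis using U_eq[of H' t i] cH' UH pH' val_ge1[of m "i - 1"] by simp
    qed
  qed
  then show ?thesis using H_def H'_def by simp
qed

lemma spe1: "is_SPE (m + 1) m (VV m) (sig1 m) t (s1 m)"
  unfolding is_SPE_def strategy_profile_def
proof (intro conjI allI impI)
  fix i h assume "i < m + 1" show "0 \<le> s1 m i h" by (rule s1_nn)
next
  fix h :: hist and i :: nat and s' :: "hist \<Rightarrow> real"
  assume h: "valid_hist (m + 1) m h \<and> length h < m" and i: "i < m + 1" and nn: "\<forall>h'. 0 \<le> s' h'"
  then have lh: "length h < m" by simp
  have nn': "\<And>g. 0 \<le> s' g" using nn by simp
  show "utility (VV m) (sig1 m) t i (play (m + 1) m ((s1 m)(i := s')) h)
       \<le> utility (VV m) (sig1 m) t i (play (m + 1) m (s1 m) h)"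
  proof (cases "won t h 0 = {}")
    case False then show ?thesis using caseA[OF lh False i nn'] by simp
  next
    case B: True
    show ?thesis
    proof (cases "i = 0")
      case True then show ?thesis using caseB0[OF lh B nn'] by simp
    next
      case i0: False
      show ?thesis
      proof (cases "h = []")
        case True then show ?thesis using caseNil[of i s'] i0 i nn' by simp
      next
        case False
        then have "1 \<le> length h" by (cases h) auto
        then show ?thesis using casePos[OF lh _ B _ i nn'] i0 by simp
      qed
    qed
  qed
qed

lemma rev1: "revenue t (play (m + 1) m (s1 m) []) = 1"
proof -
  define H where "H = play (m + 1) m (s1 m) []"
  note N = playNil[OF H_def]
  obtain m' where m': "m = Suc m'" using m1 by (cases m) auto
  have "revenue t H = (\<Sum>k<Suc m'. (H ! k) (t (take k H) (H ! k)))"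
    using N(6) m' by (simp add: revenue_def)
  also have "\<dots> = (H ! 0) (t [] (H ! 0)) + (\<Sum>k<m'. (H ! Suc k) (t (take (Suc k) H) (H ! Suc k)))"
    by (subst sum.lessThan_Suc_shift) simp
  also have "(\<Sum>k<m'. (H ! Suc k) (t (take (Suc k) H) (H ! Suc k))) = 0"
    by (rule sum.neutral) (use N(5) m' in auto)
  finally show ?thesis using N(1,2) H_def by simp
qed

end

lemma sig1_order: "is_order m (sig1 m)" by (auto simp: is_order_def sig1_def)


theorem mainTheorem12:
  shows "\<exists>V :: nat \<Rightarrow> nat \<Rightarrow> nat \<Rightarrow> real.
    (\<lambda>m. opt_welfare (V m) (m + 1) m - real m) \<longlonglongrightarrow> 0 \<and>
    (\<forall>m\<ge>1.
       (\<forall>i<m + 1. \<forall>j<m. 0 \<le> V m i j) \<and>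
       (\<exists>\<sigma>1 \<tau>1 s. is_order m \<sigma>1 \<and> tie_rule (m + 1) \<tau>1 \<and>
          is_SPE (m + 1) m (V m) \<sigma>1 \<tau>1 s \<and> revenue \<tau>1 (play (m + 1) m s []) = 1) \<and>
       (\<exists>\<sigma>2. is_order m \<sigma>2 \<and>
          (\<forall>\<tau> s. tie_rule (m + 1) \<tau> \<and> is_SPE (m + 1) m (V m) \<sigma>2 \<tau> s \<longrightarrow>
             revenue \<tau> (play (m + 1) m s []) \<ge> real m)))"
proof (rule exI[of _ VV], rule conjI)
  show "(\<lambda>m. opt_welfare (VV m) (m + 1) m - real m) \<longlonglongrightarrow> 0" by (rule welfare_lim)
  show "\<forall>m\<ge>1.
       (\<forall>i<m + 1. \<forall>j<m. 0 \<le> VV m i j) \<and>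
       (\<exists>\<sigma>1 \<tau>1 s. is_order m \<sigma>1 \<and> tie_rule (m + 1) \<tau>1 \<and>
          is_SPE (m + 1) m (VV m) \<sigma>1 \<tau>1 s \<and> revenue \<tau>1 (play (m + 1) m s []) = 1) \<and>
       (\<exists>\<sigma>2. is_order m \<sigma>2 \<and>
          (\<forall>\<tau> s. tie_rule (m + 1) \<tau> \<and> is_SPE (m + 1) m (VV m) \<sigma>2 \<tau> s \<longrightarrow>
             revenue \<tau> (play (m + 1) m s []) \<ge> real m))"
  proof (intro allI impI)
    fix m :: nat assume m1: "1 \<le> m"
    have A: "\<forall>i<m + 1. \<forall>j<m. 0 \<le> VV m i j" using VV_nn by blast
    have B: "\<exists>\<sigma>1 \<tau>1 s. is_order m \<sigma>1 \<and> tie_rule (m + 1) \<tau>1 \<and>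
          is_SPE (m + 1) m (VV m) \<sigma>1 \<tau>1 s \<and> revenue \<tau>1 (play (m + 1) m s []) = 1"
    proof -
      have "tie_rule (m + 1) (tau1 (m + 1))" by (rule tau1_tie) simp
      then show ?thesis using sig1_order[of m] spe1[OF m1] rev1[OF m1] by blast
    qed
    have C: "\<exists>\<sigma>2. is_order m \<sigma>2 \<and>
          (\<forall>\<tau> s. tie_rule (m + 1) \<tau> \<and> is_SPE (m + 1) m (VV m) \<sigma>2 \<tau> s \<longrightarrow>
             revenue \<tau> (play (m + 1) m s []) \<ge> real m)"
      using sig2_order[OF m1] part2[OF m1] by blast
    show "(\<forall>i<m + 1. \<forall>j<m. 0 \<le> VV m i j) \<and>
       (\<exists>\<sigma>1 \<tau>1 s. is_order m \<sigma>1 \<and> tie_rule (m + 1) \<tau>1 \<and>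
          is_SPE (m + 1) m (VV m) \<sigma>1 \<tau>1 s \<and> revenue \<tau>1 (play (m + 1) m s []) = 1) \<and>
       (\<exists>\<sigma>2. is_order m \<sigma>2 \<and>
          (\<forall>\<tau> s. tie_rule (m + 1) \<tau> \<and> is_SPE (m + 1) m (VV m) \<sigma>2 \<tau> s \<longrightarrow>
             revenue \<tau> (play (m + 1) m s []) \<ge> real m))"
      using A B C by blast
  qed
qed

end
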